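(* Let $\mathcal{H}$ be a finite hypothesis class and let $k\ge0$, $l\ge0$ be integers with $k\ge l$. Then \[ \mathrm{ELdim}(\mathcal{H}^l,k)\le e(k+1)\,|\mathcal{H}|^{\frac{1}{k+1-l}}. \]
   Context: Hypotheses are maps $\mathcal{X}\to\{-1,+1\}$. $\mathcal{C}^l$ is the class of functions $x\mapsto1-2I(x\in D)$ with $D\subseteq\mathcal{X}$, $|D|\le l$; $\mathcal{H}^l=\{x\mapsto h(x)c(x):h\in\mathcal{H},c\in\mathcal{C}^l\}$. Extended mistake tree w.r.t. a class $\mathcal{F}$: a finite full binary tree (possibly a single leaf) in which each internal node $v$ is labeled by a point $x_v\in\mathcal{X}$ and has two solid downward edges, to its left child (label $-1$) and right child (label $+1$), plus one dashed downward edge going to one of its two children; each leaf is labeled by some $h\in\mathcal{F}$ with $h(x_v)$ equal to the direction label ($-1$ left, $+1$ right) at every internal node $v$ on the path from the root to that leaf. A root-to-leaf path chooses at each internal node one of its downward edges; its length is its number of edges. The tree is $(k,m)$-difficult if every root-to-leaf path using at most $k$ solid edges has length at least $m$. The extended Littlestone dimension $\mathrm{ELdim}(\mathcal{F},k)$ is the supremum of $m$ such that a $(k,m)$-difficult extended mistake tree w.r.t. $\mathcal{F}$ exists (possibly $\infty$). *)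

theory Defs
  imports Complex_Main "HOL-Library.Extended_Real"
begin

text \<open>Hypotheses are maps into {-1,+1}, represented as functions into int.\<close>

definition classC :: "nat \<Rightarrow> ('x \<Rightarrow> int) set" where
  "classC l = {(\<lambda>x. 1 - 2 * (if x \<in> D then 1 else 0)) | D. finite D \<and> card D \<le> l}"

definition classHl :: "('x \<Rightarrow> int) set \<Rightarrow> nat \<Rightarrow> ('x \<Rightarrow> int) set" where
  "classHl H l = {(\<lambda>x. h x * c x) | h c. h \<in> H \<and> c \<in> classC l}"

text \<open>Extended mistake trees: a node carries a point, the direction of its dashed edge
  (True = dashed edge goes to the right child, False = to the left child),
  and its left (label -1) and right (label +1) subtrees.\<close>

datatype ('x, 'h) emtree = Leaf 'h | Node 'x bool "('x, 'h) emtree" "('x, 'h) emtree"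

fun emt_ok :: "('x \<Rightarrow> int) set \<Rightarrow> (('x \<Rightarrow> int) \<Rightarrow> bool) \<Rightarrow> ('x, 'x \<Rightarrow> int) emtree \<Rightarrow> bool" where
  "emt_ok F P (Leaf h) = (h \<in> F \<and> P h)"
| "emt_ok F P (Node x d l r) =
     (emt_ok F (\<lambda>h. P h \<and> h x = -1) l \<and> emt_ok F (\<lambda>h. P h \<and> h x = 1) r)"

definition is_emtree :: "('x \<Rightarrow> int) set \<Rightarrow> ('x, 'x \<Rightarrow> int) emtree \<Rightarrow> bool" where
  "is_emtree F t = emt_ok F (\<lambda>_. True) t"

text \<open>difficult k m t: every root-to-leaf path of t using at most k solid edges
  has length at least m.\<close>

fun difficult :: "nat \<Rightarrow> nat \<Rightarrow> ('x, 'h) emtree \<Rightarrow> bool" where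
  "difficult k m (Leaf h) = (m \<le> 0)"
| "difficult k m (Node x d l r) =
     ((0 < k \<longrightarrow> difficult (k - 1) (m - 1) l \<and> difficult (k - 1) (m - 1) r)
      \<and> difficult k (m - 1) (if d then r else l))"

definition ELdim :: "('x \<Rightarrow> int) set \<Rightarrow> nat \<Rightarrow> enat" where
  "ELdim F k = Sup {enat m | m. \<exists>t. is_emtree F t \<and> difficult k m t}"

end

theory Submission imports Defs begin

definition W :: "nat \<Rightarrow> nat \<Rightarrow> int \<Rightarrow> real" where
"W m b r = (if r < 0 then 0 else if int b \<le> r \<or> m < b then 1
   else min 1 (real (m choose nat r) / real (m choose b)))"

lemma W_le1: "W m b r \<le> 1" by (simp add: W_def)
lemma W_ge0: "0 \<le> W m b r" by (simp add: W_def)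

lemma absorb1: "real b * real (m choose b) = real m * real ((m - 1) choose (b - 1))" if "0 < b"
  using times_binomial_minus1_eq[OF that, of m] by (metis of_nat_mult)
lemma absorb2: "real (m - b) * real (m choose b) = real m * real ((m - 1) choose b)"
  using binomial_absorb_comp[of m b] by (metis of_nat_mult)

lemma key:
  assumes m: "0 < m" and b: "0 < b"
    and rr: "(r1 = r \<and> r2 = r - 1) \<or> (r1 = r - 1 \<and> r2 = r)"
  shows "(1 - (if m \<le> b then 1 else real b / real m)) * W (m-1) b r1
         + (if m \<le> b then 1 else real b / real m) * W (m-1) (b-1) r2 \<le> W m b r"
proof -
  define mu where "mu = (if m \<le> b then 1 else real b / real m)"
  have mu01: "0 \<le> mu" "mu \<le> 1" using m by (auto simp: mu_def)
  have rhs1: "(1 - mu) * W (m-1) b r1 + mu * W (m-1) (b-1) r2 \<le> 1"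
  proof -
    have "(1 - mu) * W (m-1) b r1 \<le> (1 - mu) * 1"
      using mu01 W_le1 by (intro mult_left_mono) auto
    moreover have "mu * W (m-1) (b-1) r2 \<le> mu * 1"
      using mu01 W_le1 by (intro mult_left_mono) auto
    ultimately show ?thesis by simp
  qed
  show ?thesis
  proof (cases "W m b r = 1")
    case True then show ?thesis using rhs1 by (simp add: mu_def)
  next
    case False
    show ?thesis
    proof (cases "r < 0")
      case True
      then have "W (m-1) b r1 = 0" "W (m-1) (b-1) r2 = 0" using rr by (auto simp: W_def)
      then show ?thesis using True by (simp add: W_def)
    next
      case rnn: False
      have rb: "r < int b" and bm: "b \<le> m" using False rnn unfolding W_def by (auto split: if_splits)
      have bm': "b < m"
      proof (rule ccontr)
        assume "\<not> b < m" then have "m = b" using bm by simp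
        then have "W m b r = min 1 (real (m choose nat r))" using rnn rb by (simp add: W_def)
        also have "\<dots> = 1" using rnn rb \<open>m = b\<close> zero_less_binomial[of "nat r" b] by (auto simp: min_def Suc_le_eq)
        finally show False using False by simp
      qed
      define f where "f s = (if s < 0 then 0 else real ((m-1) choose nat s))" for s :: int
      have Wr: "W m b r = min 1 (real (m choose nat r) / real (m choose b))"
        using rnn rb bm by (simp add: W_def)
      have Cpos: "0 < real (m choose b)" "0 < real ((m-1) choose b)" "0 < real ((m-1) choose (b-1))"
        using bm' by auto
      have s1: "W (m-1) b s \<le> f s / real ((m-1) choose b)" if "s = r \<or> s = r - 1" for s
        using that rb bm' by (auto simp: W_def f_def)
      have s2: "W (m-1) (b-1) s \<le> f s / real ((m-1) choose (b-1))" if "s = r \<or> s = r - 1" for s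
      proof (cases "s < 0")
        case True then show ?thesis by (simp add: W_def f_def)
      next
        case False
        show ?thesis
        proof (cases "int (b - 1) \<le> s")
          case True
          then have "s = int b - 1" using that rb b by auto
          then have "nat s = b - 1" using b by auto
          then show ?thesis using True False Cpos by (simp add: W_def f_def)
        next
          case c2: False
          then show ?thesis using False bm' by (auto simp: W_def f_def)
        qed
      qed
      have lam: "(1 - mu) / real ((m-1) choose b) = 1 / real (m choose b)"
        using absorb2[of m b] bm' m Cpos by (simp add: mu_def field_simps of_nat_diff)
      have muq: "mu / real ((m-1) choose (b-1)) = 1 / real (m choose b)"
        using absorb1[OF b, of m] bm' m Cpos by (simp add: mu_def field_simps)
      have pas: "f r + f (r - 1) = real (m choose nat r)"
      proof (cases "r = 0")
        case True then show ?thesis by (simp add: f_def)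
      next
        case False
        then have "0 < nat r" using rnn by simp
        then have "m choose nat r = ((m - 1) choose (nat r - 1)) + ((m - 1) choose nat r)"
          using choose_reduce_nat m by blast
        moreover have "nat (r - 1) = nat r - 1" by simp
        ultimately show ?thesis using False rnn by (simp add: f_def)
      qed
      have "(1 - mu) * W (m-1) b r1 + mu * W (m-1) (b-1) r2
            \<le> (1 - mu) * (f r1 / real ((m-1) choose b)) + mu * (f r2 / real ((m-1) choose (b-1)))"
      proof (rule add_mono)
        show "(1 - mu) * W (m-1) b r1 \<le> (1 - mu) * (f r1 / real ((m-1) choose b))"
          by (rule mult_left_mono[OF s1]) (use rr mu01 in auto)
        show "mu * W (m-1) (b-1) r2 \<le> mu * (f r2 / real ((m-1) choose (b-1)))"
          by (rule mult_left_mono[OF s2]) (use rr mu01 in auto)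
      qed
      also have "\<dots> = f r1 * ((1 - mu) / real ((m-1) choose b)) + f r2 * (mu / real ((m-1) choose (b-1)))"
        by (simp add: mult.commute)
      also have "\<dots> = f r1 / real (m choose b) + f r2 / real (m choose b)"
        unfolding lam muq by simp
      also have "\<dots> = real (m choose nat r) / real (m choose b)"
        using pas rr by (auto simp: add_divide_distrib[symmetric] add.commute)
      finally show ?thesis using rhs1 Wr by (simp add: mu_def)
    qed
  qed
qed

lemma ok_ex: "emt_ok F P t \<Longrightarrow> \<exists>g\<in>F. P g"
  by (induction t arbitrary: P) auto

definition Inv :: "('x \<Rightarrow> int) set \<Rightarrow> nat \<Rightarrow> (('x \<Rightarrow> int) \<Rightarrow> bool) \<Rightarrow> (('x \<Rightarrow> int) \<Rightarrow> int) \<Rightarrow> 'x set \<Rightarrow> bool" where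
  "Inv H l P R V = (\<forall>h\<in>H. \<forall>D. finite D \<longrightarrow> P (\<lambda>x. h x * (1 - 2 * (if x \<in> D then 1 else 0)))
      \<longrightarrow> int l - int (card (D \<inter> V)) \<le> R h)"

definition Jv :: "(('x \<Rightarrow> int) \<Rightarrow> bool) \<Rightarrow> 'x set \<Rightarrow> bool" where
  "Jv P V = (\<forall>y\<in>V. \<exists>d. \<forall>g. P g \<longrightarrow> g y = d)"

lemma alive:
  assumes "emt_ok (classHl H l) P t" "Inv H l P R V"
  shows "\<exists>h\<in>H. 0 \<le> R h"
proof -
  obtain g where g: "g \<in> classHl H l" "P g" using ok_ex[OF assms(1)] by blast
  then obtain h D where hD: "h \<in> H" "finite D" "card D \<le> l"
    "g = (\<lambda>x. h x * (1 - 2 * (if x \<in> D then 1 else 0)))"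
    unfolding classHl_def classC_def by blast
  have "int l - int (card (D \<inter> V)) \<le> R h" using assms(2) hD g(2) unfolding Inv_def by blast
  moreover have "card (D \<inter> V) \<le> card D" using hD(2) by (simp add: card_mono)
  ultimately show ?thesis using hD by force
qed

lemma child:
  assumes hH: "\<forall>h\<in>H. \<forall>x. h x \<in> {-1, 1}" and I: "Inv H l P R V" and J: "Jv P V"
    and xV: "x \<notin> V" and v: "v \<in> {-1, 1}"
  shows "Inv H l (\<lambda>g. P g \<and> g x = v) (\<lambda>h. if h x = v then R h else R h - 1) (insert x V)"
    "Jv (\<lambda>g. P g \<and> g x = v) (insert x V)"
proof -
  show "Jv (\<lambda>g. P g \<and> g x = v) (insert x V)" using J unfolding Jv_def by blast
  show "Inv H l (\<lambda>g. P g \<and> g x = v) (\<lambda>h. if h x = v then R h else R h - 1) (insert x V)"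
    unfolding Inv_def
  proof (intro ballI allI impI)
    fix h D assume h: "h \<in> H" and D: "finite D"
      and P': "P (\<lambda>x. h x * (1 - 2 * (if x \<in> D then 1 else 0))) \<and> h x * (1 - 2 * (if x \<in> D then 1 else 0)) = v"
    have base: "int l - int (card (D \<inter> V)) \<le> R h" using I h D P' unfolding Inv_def by blast
    have hx: "h x \<in> {-1, 1}" using hH h by blast
    show "int l - int (card (D \<inter> insert x V)) \<le> (if h x = v then R h else R h - 1)"
    proof (cases "h x = v")
      case True
      then have "x \<notin> D" using P' hx by (auto split: if_splits)
      then have "D \<inter> insert x V = D \<inter> V" by auto
      then show ?thesis using True base by simp
    next
      case False
      then have "x \<in> D" using P' hx v by (auto split: if_splits)
      then have "D \<inter> insert x V = insert x (D \<inter> V)" by auto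
      moreover have "card (insert x (D \<inter> V)) = Suc (card (D \<inter> V))"
        using xV D by simp
      ultimately show ?thesis using False base by simp
    qed
  qed
qed

lemma step:
  fixes H :: "('x \<Rightarrow> int) set"
  assumes hH: "\<forall>h\<in>H. \<forall>x. h x \<in> {-1, 1}" and fin: "finite H"
    and m: "0 < m" and b: "0 < b" and dv: "dv \<in> {-1, 1 :: int}"
    and A1: "1 \<le> (\<Sum>h\<in>H. W (m-1) b (if h x = dv then R h else R h - 1))"
    and A2: "1 \<le> (\<Sum>h\<in>H. W (m-1) (b-1) (if h x = - dv then R h else R h - 1))"
  shows "1 \<le> (\<Sum>h\<in>H. W m b (R h))"
proof -
  define mu where "mu = (if m \<le> b then 1 else real b / real m)"
  have mu01: "0 \<le> mu" "mu \<le> 1" using m by (auto simp: mu_def)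
  have per: "(1 - mu) * W (m-1) b (if h x = dv then R h else R h - 1)
       + mu * W (m-1) (b-1) (if h x = - dv then R h else R h - 1) \<le> W m b (R h)" if "h \<in> H" for h
  proof -
    have hx: "h x \<in> {-1, 1}" using hH that by blast
    have "((if h x = dv then R h else R h - 1) = R h \<and> (if h x = - dv then R h else R h - 1) = R h - 1)
        \<or> ((if h x = dv then R h else R h - 1) = R h - 1 \<and> (if h x = - dv then R h else R h - 1) = R h)"
      using hx dv by auto
    from key[OF m b this] show ?thesis unfolding mu_def .
  qed
  have "1 = (1 - mu) * 1 + mu * 1" by simp
  also have "\<dots> \<le> (1 - mu) * (\<Sum>h\<in>H. W (m-1) b (if h x = dv then R h else R h - 1))
      + mu * (\<Sum>h\<in>H. W (m-1) (b-1) (if h x = - dv then R h else R h - 1))"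
    using mu01 A1 A2 by (intro add_mono mult_left_mono) auto
  also have "\<dots> = (\<Sum>h\<in>H. (1 - mu) * W (m-1) b (if h x = dv then R h else R h - 1)
       + mu * W (m-1) (b-1) (if h x = - dv then R h else R h - 1))"
    by (simp add: sum_distrib_left sum.distrib)
  also have "\<dots> \<le> (\<Sum>h\<in>H. W m b (R h))"
    using per by (intro sum_mono) auto
  finally show ?thesis .
qed


lemma core:
  fixes H :: "('x \<Rightarrow> int) set"
  assumes hH: "\<forall>h\<in>H. \<forall>x. h x \<in> {-1, 1}" and fin: "finite H"
  shows "emt_ok (classHl H l) P t \<Longrightarrow> (0 < b \<Longrightarrow> difficult (b-1) m t) \<Longrightarrow> Inv H l P R V
     \<Longrightarrow> Jv P V \<Longrightarrow> 1 \<le> (\<Sum>h\<in>H. W m b (R h))"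
proof (induction t arbitrary: P R V b m)
  have easy: "1 \<le> (\<Sum>h\<in>H. W m b (R h))"
    if ok: "emt_ok (classHl H l) P t" and I: "Inv H l P R V" and bm: "b = 0 \<or> m = 0"
    for P R V b m and t :: "('x, 'x \<Rightarrow> int) emtree"
  proof -
    obtain h where h: "h \<in> H" "0 \<le> R h" using alive[OF ok I] by blast
    have "W m b (R h) = 1" using h bm by (auto simp: W_def)
    moreover have "W m b (R h) \<le> (\<Sum>h\<in>H. W m b (R h))"
      using h(1) fin W_ge0 by (intro member_le_sum) auto
    ultimately show ?thesis by simp
  qed
  {
    case (Leaf g)
    show ?case
    proof (cases "b = 0")
      case True then show ?thesis using easy Leaf by blast
    next
      case False then have "m = 0" using Leaf by simp
      then show ?thesis using easy Leaf by blast
    qed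
  next
    case (Node x d lt rt)
    show ?case
    proof (cases "b = 0 \<or> m = 0")
      case True then show ?thesis using easy Node by blast
    next
      case False
      then have b: "0 < b" and m: "0 < m" by auto
      have okl: "emt_ok (classHl H l) (\<lambda>g. P g \<and> g x = -1) lt"
        and okr: "emt_ok (classHl H l) (\<lambda>g. P g \<and> g x = 1) rt" using Node.prems(1) by auto
      have xV: "x \<notin> V"
      proof
        assume "x \<in> V"
        then obtain d0 where d0: "\<forall>g. P g \<longrightarrow> g x = d0" using Node.prems(4) unfolding Jv_def by blast
        obtain g1 where "P g1 \<and> g1 x = -1" using ok_ex[OF okl] by blast
        moreover obtain g2 where "P g2 \<and> g2 x = 1" using ok_ex[OF okr] by blast
        ultimately have "g1 x = d0" "g2 x = d0" "g1 x = -1" "g2 x = 1" using d0 by auto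
        then show False by simp
      qed
      have dif: "0 < b - 1 \<longrightarrow> difficult (b - 1 - 1) (m - 1) lt \<and> difficult (b - 1 - 1) (m - 1) rt"
        "difficult (b - 1) (m - 1) (if d then rt else lt)"
        using Node.prems(2)[OF b] by auto
      note cl = child[OF hH Node.prems(3) Node.prems(4) xV, of "-1"]
      note cr = child[OF hH Node.prems(3) Node.prems(4) xV, of "1"]
      have Il: "1 \<le> (\<Sum>h\<in>H. W (m-1) b' (if h x = -1 then R h else R h - 1))"
        if "0 < b' \<Longrightarrow> difficult (b'-1) (m-1) lt" for b'
        using Node.IH(1)[OF okl that cl(1) cl(2)] by simp
      have Ir: "1 \<le> (\<Sum>h\<in>H. W (m-1) b' (if h x = 1 then R h else R h - 1))"
        if "0 < b' \<Longrightarrow> difficult (b'-1) (m-1) rt" for b'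
        using Node.IH(2)[OF okr that cr(1) cr(2)] by simp
      show ?thesis
      proof (cases d)
        case True
        have A1: "1 \<le> (\<Sum>h\<in>H. W (m-1) b (if h x = 1 then R h else R h - 1))"
          using Ir dif True by simp
        have A2: "1 \<le> (\<Sum>h\<in>H. W (m-1) (b-1) (if h x = - 1 then R h else R h - 1))"
          using Il[of "b-1"] dif by simp
        show ?thesis using step[OF hH fin m b _ A1] A2 by simp
      next
        case False
        have A1: "1 \<le> (\<Sum>h\<in>H. W (m-1) b (if h x = -1 then R h else R h - 1))"
          using Il dif False by simp
        have A2: "1 \<le> (\<Sum>h\<in>H. W (m-1) (b-1) (if h x = - (-1) then R h else R h - 1))"
          using Ir[of "b-1"] dif by simp
        show ?thesis using step[OF hH fin m b _ A1] A2 by simp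
      qed
    qed
  }
qed


lemma ratio_step:
  fixes M E bb S :: real
  assumes E: "2 \<le> E" and Mb: "E * bb \<le> M" and Sb: "S + 1 \<le> bb" and S0: "0 \<le> S"
  shows "M * (S + 1) \<le> (M - S) * (E * bb)"
proof -
  have b0: "0 \<le> bb" using Sb S0 by linarith
  have Ebb: "2 * bb \<le> E * bb" using E b0 by (intro mult_right_mono) auto
  have e1: "0 \<le> E * bb - S - 1" using Ebb Sb S0 by linarith
  have e2: "0 \<le> E * bb - 2 * S - 1" using Ebb Sb S0 by linarith
  have h1: "(E * bb) * (E * bb - S - 1) \<le> M * (E * bb - S - 1)"
    using Mb e1 by (intro mult_right_mono) auto
  have h3: "0 \<le> (E * bb) * (E * bb - 2 * S - 1)"
    using e2 b0 E by (intro mult_nonneg_nonneg) auto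
  have eq1: "(M - S) * (E * bb) - M * (S + 1) = M * (E * bb - S - 1) - S * (E * bb)"
    by (simp add: algebra_simps)
  have eq2: "(E * bb) * (E * bb - 2 * S - 1) = (E * bb) * (E * bb - S - 1) - S * (E * bb)"
    by (simp add: algebra_simps)
  show ?thesis using eq1 eq2 h1 h3 by linarith
qed

lemma growth:
  assumes E: "2 \<le> E" and Mb: "E * real b \<le> real m" and ld: "l + d \<le> b"
  shows "real (m choose l) * (real m / (E * real b)) ^ d \<le> real (m choose (l + d))"
  using ld
proof (induction d)
  case 0 then show ?case by simp
next
  case (Suc d)
  define s where "s = l + d"
  have sb: "s + 1 \<le> b" using Suc.prems s_def by simp
  have bpos: "0 < b" using sb by simp
  have Ebpos: "0 < E * real b" using E bpos by simp
  have "real b \<le> E * real b" using E bpos by simp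
  then have sm: "s < m" using sb Mb by linarith
  have nat_id: "(s + 1) * (m choose (s + 1)) = (m - s) * (m choose s)"
    using times_binomial_minus1_eq[of "s+1" m] binomial_absorb_comp[of m s] by simp
  have rid: "real (s + 1) * real (m choose (s + 1)) = real (m - s) * real (m choose s)"
    using nat_id by (metis of_nat_mult)
  have rs: "real m * (real s + 1) \<le> (real m - real s) * (E * real b)"
    using ratio_step[OF E Mb, of "real s"] sb by simp
  have q1: "real m \<le> ((real m - real s) / (real s + 1)) * (E * real b)"
    using rs by (simp add: field_simps)
  have q: "real m / (E * real b) \<le> (real m - real s) / (real s + 1)"
    using q1 by (simp add: pos_divide_le_eq[OF Ebpos])
  have IH: "real (m choose l) * (real m / (E * real b)) ^ d \<le> real (m choose s)"
    using Suc s_def by simp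
  have q0: "0 \<le> real m / (E * real b)" using Ebpos by simp
  have "real (m choose l) * (real m / (E * real b)) ^ Suc d
      = (real (m choose l) * (real m / (E * real b)) ^ d) * (real m / (E * real b))" by simp
  also have "\<dots> \<le> real (m choose s) * ((real m - real s) / (real s + 1))"
    using IH q q0 by (intro mult_mono) auto
  also have "\<dots> = real (m choose (s + 1))"
    using rid sm by (simp add: field_simps of_nat_diff)
  finally show ?case using s_def by simp
qed

lemma final_bound:
  assumes A: "1 \<le> real (card H) * W m b (int l)" and lb: "l < b"
  shows "real m \<le> exp 1 * real b * real (card H) powr (1 / real (b - l))"
proof -
  define N where "N = real (card H)"
  define E :: real where "E = exp 1"
  have E2: "2 \<le> E" unfolding E_def using exp_ge_add_one_self[of 1] by simp
  have N1: "1 \<le> N"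
  proof -
    have "N * W m b (int l) \<le> N * 1" using W_le1 N_def by (intro mult_left_mono) auto
    then show ?thesis using A N_def by simp
  qed
  have j0: "0 < real (b - l)" using lb by simp
  have Np: "1 \<le> N powr (1 / real (b - l))" using N1 j0 by (simp add: ge_one_powr_ge_zero)
  have bpos: "0 < b" using lb by simp
  show ?thesis
  proof (cases "real m \<le> E * real b")
    case True
    have X: "E * real b * 1 \<le> E * real b * N powr (1 / real (b - l))"
      using Np E2 by (intro mult_left_mono) auto
    have "E * real b \<le> E * real b * N powr (1 / real (b - l))" using X by (simp only: mult_1_right)
    then show ?thesis using True unfolding E_def N_def by linarith
  next
    case False
    then have Mb: "E * real b \<le> real m" by simp
    have "real b \<le> E * real b" using E2 bpos by simp
    then have bm: "b \<le> m" using Mb by linarith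
    have Wle: "W m b (int l) \<le> real (m choose l) / real (m choose b)"
      using lb bm by (simp add: W_def)
    have Cb: "0 < real (m choose b)" "0 < real (m choose l)" using bm lb by auto
    have "1 \<le> N * (real (m choose l) / real (m choose b))"
      using A Wle N_def order_trans[OF A] by (metis mult_left_mono of_nat_0_le_iff)
    then have NC: "real (m choose b) \<le> N * real (m choose l)" using Cb by (simp add: field_simps)
    define q where "q = real m / (E * real b)"
    have qpos: "0 < q" unfolding q_def using E2 bpos bm by simp
    have g: "real (m choose l) * q ^ (b - l) \<le> real (m choose b)"
      using growth[OF E2 Mb, of l "b - l"] lb unfolding q_def by simp
    have "real (m choose l) * q ^ (b - l) \<le> real (m choose l) * N" using g NC by (simp add: mult.commute)
    then have qN: "q ^ (b - l) \<le> N" using Cb by simp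
    have "q = (q ^ (b - l)) powr (1 / real (b - l))"
      using qpos j0 by (simp add: powr_realpow[symmetric] powr_powr)
    also have "\<dots> \<le> N powr (1 / real (b - l))"
      using qN qpos j0 by (intro powr_mono2) auto
    finally have "q \<le> N powr (1 / real (b - l))" .
    then have "E * real b * q \<le> E * real b * N powr (1 / real (b - l))"
      using E2 by (intro mult_left_mono) auto
    moreover have "E * real b * q = real m" unfolding q_def using E2 bpos by simp
    ultimately show ?thesis unfolding E_def N_def by linarith
  qed
qed


theorem mainTheorem5:
  fixes H :: "('x \<Rightarrow> int) set" and k l :: nat
  assumes "finite H"
    and "\<forall>h\<in>H. \<forall>x. h x \<in> {-1, 1}"
    and "l \<le> k"
  shows "ereal_of_enat (ELdim (classHl H l) k)
           \<le> ereal (exp 1 * real (k + 1) * real (card H) powr (1 / real (k + 1 - l)))"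
proof -
  define B where "B = exp 1 * real (k + 1) * real (card H) powr (1 / real (k + 1 - l))"
  have B0: "0 \<le> B" unfolding B_def by simp
  define N where "N = nat \<lfloor>B\<rfloor>"
  have mB: "real m \<le> B" if t: "is_emtree (classHl H l) t" "difficult k m t" for m t
  proof -
    have I: "Inv H l (\<lambda>_. True) (\<lambda>_. int l) {}" unfolding Inv_def by simp
    have J: "Jv (\<lambda>_. True) {}" unfolding Jv_def by simp
    have "1 \<le> (\<Sum>h\<in>H. W m (k + 1) (int l))"
      using core[OF assms(2) assms(1), of l "\<lambda>_. True" t "k + 1" m "\<lambda>_. int l" "{}"] t I J
      unfolding is_emtree_def by simp
    then have "1 \<le> real (card H) * W m (k + 1) (int l)" by simp
    from final_bound[OF this] assms(3) show ?thesis unfolding B_def by simp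
  qed
  have "ELdim (classHl H l) k \<le> enat N"
    unfolding ELdim_def
  proof (rule Sup_least)
    fix y assume "y \<in> {enat m |m. \<exists>t. is_emtree (classHl H l) t \<and> difficult k m t}"
    then obtain m t where y: "y = enat m" "is_emtree (classHl H l) t" "difficult k m t" by blast
    have "real m \<le> B" using mB y by blast
    then have "m \<le> N" unfolding N_def by linarith
    then show "y \<le> enat N" using y by simp
  qed
  then have "ereal_of_enat (ELdim (classHl H l) k) \<le> ereal_of_enat (enat N)"
    by (simp only: ereal_of_enat_le_iff)
  also have "\<dots> = ereal (real N)" by simp
  also have "\<dots> \<le> ereal B" unfolding N_def using B0 by simp
  finally show ?thesis unfolding B_def .
qed

end
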